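(* For every integer $r \ge 2$ there exists an integer $N = N(r)$ such that for every integer $n \ge N$ there exists a graph $G=(V,E)$ with (i) $|V| = 7rn$; (ii) $500(\log r) r^2 n < |E| < 600 (\log r) r^2 n$; (iii) for every two disjoint sets $S, T \subseteq V$ with $|S| = |T| = n$, the number of edges of $G$ with both endpoints in $S \cup T$ and at least one endpoint in $S$ is at most $70 (\log r) n$.
   Context: $\log$ denotes the natural logarithm. *)

theory Defs
  imports Complex_Main
begin

definition simple_graph :: "'a set \<Rightarrow> 'a set set \<Rightarrow> bool" where
  "simple_graph V E \<longleftrightarrow> finite V \<and> (\<forall>e\<in>E. e \<subseteq> V \<and> card e = 2)"

definition edges_touching :: "'a set set \<Rightarrow> 'a set \<Rightarrow> 'a set \<Rightarrow> 'a set set" where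
  "edges_touching E S T = {e \<in> E. e \<subseteq> S \<union> T \<and> e \<inter> S \<noteq> {}}"

end

theory Submission
  imports Defs "HOL-Analysis.Analysis"
begin


lemma binomA:
  assumes "K \<le> N" "i \<le> N"
  shows "real (N - i choose K) \<le> real (N choose K) * (1 - real K / real N)^i"
  using assms(2)
proof (induction i)
  case 0 then show ?case by simp
next
  case (Suc i)
  have IH: "real (N - i choose K) \<le> real (N choose K) * (1 - real K / real N)^i"
    using Suc by simp
  have Npos: "N > 0" using Suc.prems by simp
  have d0: "0 \<le> 1 - real K / real N" using assms(1) Npos by (simp add: field_simps)
  have ab: "(N - i - K) * (N - i choose K) = (N - i) * ((N - i - 1) choose K)"
    using binomial_absorb_comp[of "N-i" K] by simp
  have key: "real (N - i - K) \<le> real (N - i) * (1 - real K / real N)"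
  proof (cases "K \<le> N - i")
    case True
    then have "real (N - i - K) = real N - real i - real K" using Suc.prems by (simp add: of_nat_diff)
    moreover have "real (N - i) * (1 - real K / real N) = real N - real i - real K + real i * real K / real N"
      using Suc.prems Npos by (simp add: of_nat_diff field_simps)
    moreover have "real i * real K / real N \<ge> 0" by simp
    ultimately show ?thesis by linarith
  next
    case False then show ?thesis using d0 by simp
  qed
  have "real (N - i) * real ((N - Suc i) choose K) = real (N - i - K) * real (N - i choose K)"
    using ab by (metis diff_Suc_eq_diff_pred of_nat_mult diff_diff_left Suc_eq_plus1)
  also have "\<dots> \<le> real (N - i) * (1 - real K / real N) * real (N - i choose K)"
    by (rule mult_right_mono[OF key]) simp
  also have "\<dots> \<le> real (N - i) * (1 - real K / real N) * (real (N choose K) * (1 - real K / real N)^i)"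
    by (rule mult_left_mono[OF IH]) (use d0 in simp)
  finally have "real (N - i) * real ((N - Suc i) choose K) \<le> real (N - i) * (real (N choose K) * (1 - real K / real N)^Suc i)"
    by (simp add: algebra_simps)
  moreover have "real (N - i) > 0" using Suc.prems by simp
  ultimately show ?case by simp
qed

lemma binomB:
  assumes "c \<ge> 0" "real K \<le> c * real (N - i)" "i \<le> K"
  shows "real (N - i choose (K - i)) \<le> real (N choose K) * c^i"
  using assms(2,3)
proof (induction i)
  case 0 then show ?case by simp
next
  case (Suc i)
  have "real (N - Suc i) \<le> real (N - i)" by simp
  then have "c * real (N - Suc i) \<le> c * real (N - i)" using assms(1) by (rule mult_left_mono)
  then have Kc: "real K \<le> c * real (N - i)" using Suc.prems(1) by linarith
  have IH: "real (N - i choose (K - i)) \<le> real (N choose K) * c^i"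
    by (rule Suc.IH[OF Kc Suc_leD[OF Suc.prems(2)]])
  have "N - Suc i > 0"
  proof (rule ccontr)
    assume "\<not> N - Suc i > 0"
    then have "N - Suc i = 0" by simp
    then show False using Suc.prems by simp
  qed
  then have iN: "Suc i < N" by simp
  define n' where "n' = N - Suc i"
  define k' where "k' = K - Suc i"
  have n': "N - i = Suc n'" "N - Suc i = n'" using iN unfolding n'_def by simp_all
  have k': "K - i = Suc k'" "K - Suc i = k'" using Suc.prems(2) unfolding k'_def by simp_all
  have ab: "Suc k' * (Suc n' choose Suc k') = Suc n' * (n' choose k')"
    using binomial_absorption[of k' "Suc n'"] by simp
  have IH': "real (Suc n' choose Suc k') \<le> real (N choose K) * c^i" using IH n' k' by simp
  have Kn: "real K \<le> c * real n'" using Suc.prems(1) n' by simp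
  have "real (Suc n') * real (n' choose k') = real (Suc k') * real (Suc n' choose Suc k')"
    using ab by (metis of_nat_mult)
  also have "\<dots> \<le> real K * real (Suc n' choose Suc k')"
    by (rule mult_right_mono) (use Suc.prems(2) k'_def in simp_all)
  also have "\<dots> \<le> (c * real n') * (real (N choose K) * c^i)"
    by (rule mult_mono[OF Kn IH']) (use assms(1) in simp_all)
  also have "\<dots> \<le> real (Suc n') * (real (N choose K) * c^Suc i)"
    using assms(1) by (simp add: algebra_simps mult_right_mono)
  finally show ?case using n' k' by simp
qed



lemma hyper:
  assumes "j \<le> m" "j \<le> q" "q < M" "m \<le> M"
  shows "real (M - q choose (m - j)) \<le> real (M choose m) * (1 - real m / real M)^(q-j) * (real m / real (M - q))^j"
proof -
  define N' where "N' = M - (q - j)"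
  have e1: "M - q = N' - j" unfolding N'_def using assms by simp
  have pos: "real (M - q) > 0" using assms by simp
  have mm: "real m \<le> (real m / real (M - q)) * real (N' - j)" using pos e1 by simp
  have h1: "real (N' - j choose (m - j)) \<le> real (N' choose m) * (real m / real (M - q))^j"
    by (rule binomB[OF _ mm]) (use assms in auto)
  have h2: "real (N' choose m) \<le> real (M choose m) * (1 - real m / real M)^(q-j)"
    unfolding N'_def by (rule binomA) (use assms in simp_all)
  have h3: "real (N' choose m) * (real m / real (M - q))^j \<le> real (M choose m) * (1 - real m / real M)^(q-j) * (real m / real (M - q))^j"
    by (rule mult_right_mono[OF h2]) simp
  have "real (M - q choose (m - j)) \<le> real (M choose m) * (1 - real m / real M)^(q-j) * (real m / real (M - q))^j"
    using order_trans[OF h1 h3] unfolding e1 .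
  then show ?thesis .
qed

lemma fact_pow_exp: "real n ^ n / fact n \<le> exp (real n)"
proof -
  have s: "(\<lambda>k. real n ^ k /\<^sub>R fact k) sums exp (real n)" by (rule exp_converges)
  have "sum (\<lambda>k. real n ^ k /\<^sub>R fact k) {n} \<le> suminf (\<lambda>k. real n ^ k /\<^sub>R fact k)"
    by (rule sum_le_suminf) (use s sums_summable in auto)
  then show ?thesis using sums_unique[OF s] by (simp add: divide_inverse_commute)
qed

lemma choose_le_exp:
  assumes "n \<ge> 1"
  shows "real (v choose n) \<le> real v ^ n * exp (real n) / real n ^ n"
proof (cases "n \<le> v")
  case False then show ?thesis by (simp add: binomial_eq_0)
next
  case True
  have "fact n * fact (v - n) * (v choose n) = fact v" by (rule binomial_fact_lemma[OF True])
  then have "fact n * (v choose n) = fact v div fact (v - n)"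
    by (metis fact_nonzero nonzero_mult_div_cancel_right mult.commute mult.assoc)
  also have "\<dots> \<le> v ^ n" by (rule fact_div_fact_le_pow[OF True])
  finally have "real (fact n * (v choose n)) \<le> real (v ^ n)" by (simp only: of_nat_le_iff)
  then have c1: "real (v choose n) \<le> real v ^ n / fact n" 
    by (simp add: field_simps)
  have np: "real n ^ n > 0" using assms by simp
  have "1 / (fact n :: real) \<le> exp (real n) / real n ^ n"
    using fact_pow_exp[of n] np by (simp add: field_simps)
  then have "real v ^ n * (1 / fact n) \<le> real v ^ n * (exp (real n) / real n ^ n)"
    by (rule mult_left_mono) simp
  then have "real v ^ n / fact n \<le> real v ^ n * exp (real n) / real n ^ n" by simp
  with c1 show ?thesis by simp
qed


lemma count_bad:
  assumes "finite P" "Q \<subseteq> P"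
  shows "card {E. E \<subseteq> P \<and> card E = m \<and> t < real (card (E \<inter> Q))}
     \<le> (\<Sum>j\<in>{j. j \<le> card Q \<and> j \<le> m \<and> t < real j}. (card Q choose j) * (card P - card Q choose (m - j)))"
proof -
  define J where "J = {j. j \<le> card Q \<and> j \<le> m \<and> t < real j}"
  define F where "F = (\<lambda>j. (\<lambda>(X,Y). X \<union> Y) ` ({X. X \<subseteq> Q \<and> card X = j} \<times> {Y. Y \<subseteq> P - Q \<and> card Y = m - j}))"
  have fQ: "finite Q" using assms finite_subset by blast
  have fJ: "finite J" unfolding J_def by simp
  have sub: "{E. E \<subseteq> P \<and> card E = m \<and> t < real (card (E \<inter> Q))} \<subseteq> (\<Union>j\<in>J. F j)"
  proof
    fix E assume "E \<in> {E. E \<subseteq> P \<and> card E = m \<and> t < real (card (E \<inter> Q))}"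
    then have E: "E \<subseteq> P" "card E = m" "t < real (card (E \<inter> Q))" by auto
    have fE: "finite E" using E(1) assms(1) finite_subset by blast
    define j where "j = card (E \<inter> Q)"
    have j1: "j \<le> card Q" unfolding j_def by (rule card_mono[OF fQ]) auto
    have j2: "j \<le> m" unfolding j_def using E(2) card_mono[OF fE, of "E \<inter> Q"] by auto
    have jJ: "j \<in> J" unfolding J_def using j1 j2 E(3) j_def by auto
    have cd: "card (E - Q) = m - j"
      using card_Diff_subset_Int[of "E" Q] fE E(2) unfolding j_def by (simp add: Int_commute)
    have "E = (\<lambda>(X,Y). X \<union> Y) (E \<inter> Q, E - Q)" by auto
    moreover have "(E \<inter> Q, E - Q) \<in> {X. X \<subseteq> Q \<and> card X = j} \<times> {Y. Y \<subseteq> P - Q \<and> card Y = m - j}"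
      using E(1) cd j_def by auto
    ultimately have "E \<in> F j" unfolding F_def by blast
    then show "E \<in> (\<Union>j\<in>J. F j)" using jJ by blast
  qed
  have fin: "finite (\<Union>j\<in>J. F j)"
  proof -
    have "(\<Union>j\<in>J. F j) \<subseteq> Pow P" unfolding F_def using assms(2) by auto
    then show ?thesis using assms(1) finite_subset by blast
  qed
  have "card {E. E \<subseteq> P \<and> card E = m \<and> t < real (card (E \<inter> Q))} \<le> card (\<Union>j\<in>J. F j)"
    by (rule card_mono[OF fin sub])
  also have "\<dots> \<le> (\<Sum>j\<in>J. card (F j))" by (rule card_UN_le[OF fJ])
  also have "\<dots> \<le> (\<Sum>j\<in>J. (card Q choose j) * (card P - card Q choose (m - j)))"
  proof (rule sum_mono)
    fix j assume "j \<in> J"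
    have "card (F j) \<le> card ({X. X \<subseteq> Q \<and> card X = j} \<times> {Y. Y \<subseteq> P - Q \<and> card Y = m - j})"
      unfolding F_def by (rule card_image_le) (use assms fQ in simp)
    also have "\<dots> = (card Q choose j) * (card (P - Q) choose (m - j))"
      by (simp add: card_cartesian_product n_subsets fQ assms)
    also have "card (P - Q) = card P - card Q" by (rule card_Diff_subset[OF fQ assms(2)])
    finally show "card (F j) \<le> (card Q choose j) * (card P - card Q choose (m - j))" .
  qed
  finally show ?thesis unfolding J_def .
qed


lemma bad_bound:
  fixes Q0 t :: real
  assumes "finite P" "Q \<subseteq> P" "real (card Q) \<le> Q0" "Q0 < real (card P)" "m \<le> card P" "t \<ge> 0"
  shows "real (card {E. E \<subseteq> P \<and> card E = m \<and> t < real (card (E \<inter> Q))})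
     \<le> real (card P choose m) * exp (- t + Q0 * (exp 1 * real m / (real (card P) - Q0) - real m / real (card P)))"
proof -
  define M where "M = card P"
  define q where "q = card Q"
  define J where "J = {j. j \<le> q \<and> j \<le> m \<and> t < real j}"
  define a where "a = real m / real (M - q)"
  define d where "d = 1 - real m / real M"
  define C where "C = real (M choose m)"
  have qM: "q < M" using assms(3,4) unfolding q_def M_def by linarith
  have Mpos: "real M > 0" using qM by simp
  have rMq: "real (M - q) = real M - real q" using qM by (simp add: of_nat_diff)
  have a0: "a \<ge> 0" unfolding a_def by simp
  have d0: "d \<ge> 0" unfolding d_def using assms(5) Mpos unfolding M_def by (simp add: field_simps)
  have C0: "C \<ge> 0" unfolding C_def by simp
  have fJ: "finite J" unfolding J_def by simp
  have JS: "J \<subseteq> {..q}" unfolding J_def by auto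
  have "real (card {E. E \<subseteq> P \<and> card E = m \<and> t < real (card (E \<inter> Q))})
     \<le> real (\<Sum>j\<in>J. (q choose j) * (M - q choose (m - j)))"
    using count_bad[OF assms(1,2), of m t] unfolding J_def q_def M_def by (simp only: of_nat_le_iff)
  also have "\<dots> = (\<Sum>j\<in>J. real (q choose j) * real (M - q choose (m - j)))" by simp
  also have "\<dots> \<le> (\<Sum>j\<in>J. real (q choose j) * (C * exp (- t) * ((a * exp 1)^j * d^(q-j))))"
  proof (rule sum_mono)
    fix j assume jJ: "j \<in> J"
    then have j: "j \<le> q" "j \<le> m" "t < real j" unfolding J_def by auto
    have h: "real (M - q choose (m - j)) \<le> C * d^(q-j) * a^j"
      unfolding C_def d_def a_def by (rule hyper) (use j qM assms(5) M_def in auto)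
    have "exp t \<le> exp (real j)" using j(3) by simp
    then have "a^j * exp t \<le> a^j * exp (real j)" by (rule mult_left_mono) (use a0 in simp)
    also have "exp (real j) = exp 1 ^ j" using exp_of_nat_mult[of j 1] by simp
    also have "a^j * exp 1 ^ j = (a * exp 1)^j" by (simp add: power_mult_distrib)
    finally have "a^j \<le> exp (-t) * (a * exp 1)^j" by (simp add: exp_minus field_simps)
    then have "C * d^(q-j) * a^j \<le> C * d^(q-j) * (exp (-t) * (a * exp 1)^j)"
      by (rule mult_left_mono) (use C0 d0 in simp)
    with h have "real (M - q choose (m - j)) \<le> C * exp (- t) * ((a * exp 1)^j * d^(q-j))"
      by (simp add: algebra_simps)
    then show "real (q choose j) * real (M - q choose (m - j)) \<le> real (q choose j) * (C * exp (- t) * ((a * exp 1)^j * d^(q-j)))"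
      by (rule mult_left_mono) simp
  qed
  also have "\<dots> = C * exp (- t) * (\<Sum>j\<in>J. real (q choose j) * (a * exp 1)^j * d^(q-j))"
    by (simp add: sum_distrib_left algebra_simps)
  also have "\<dots> \<le> C * exp (- t) * (\<Sum>j\<le>q. real (q choose j) * (a * exp 1)^j * d^(q-j))"
    by (rule mult_left_mono[OF sum_mono2[OF _ JS]]) (use a0 d0 C0 in auto)
  also have "(\<Sum>j\<le>q. real (q choose j) * (a * exp 1)^j * d^(q-j)) = (a * exp 1 + d)^q"
    by (rule binomial_ring[symmetric])
  finally have A1: "real (card {E. E \<subseteq> P \<and> card E = m \<and> t < real (card (E \<inter> Q))}) \<le> C * exp (- t) * (a * exp 1 + d)^q" .
  have ad: "(a * exp 1 + d) = 1 + (a * exp 1 - real m / real M)" unfolding d_def by simp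
  have B1: "(1 + (a * exp 1 - real m / real M))^q \<le> exp (real q * (a * exp 1 - real m / real M))"
  proof -
    have y0: "0 \<le> a * exp 1 - real m / real M"
    proof -
      have "real m / real M \<le> a" unfolding a_def using qM Mpos rMq
        by (intro divide_left_mono) auto
      also have "a \<le> a * exp 1" using a0 mult_left_mono[of 1 "exp 1" a] by simp
      finally show ?thesis by simp
    qed
    have "(1 + (a * exp 1 - real m / real M))^q \<le> (exp (a * exp 1 - real m / real M))^q"
      by (rule power_mono) (use y0 in auto)
    also have "\<dots> = exp (real q * (a * exp 1 - real m / real M))" by (simp add: exp_of_nat_mult)
    finally show ?thesis .
  qed
  have B2: "exp (real q * (a * exp 1 - real m / real M)) \<le> exp (Q0 * (exp 1 * real m / (real M - Q0) - real m / real M))"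
  proof -
    have y0: "0 \<le> a * exp 1 - real m / real M"
    proof -
      have "real m / real M \<le> a" unfolding a_def using qM Mpos rMq
        by (intro divide_left_mono) auto
      also have "a \<le> a * exp 1" using a0 mult_left_mono[of 1 "exp 1" a] by simp
      finally show ?thesis by simp
    qed
    have Q0M: "real M - Q0 > 0" using assms(4) M_def by simp
    have "a \<le> real m / (real M - Q0)" unfolding a_def rMq
      by (rule divide_left_mono) (use Q0M assms(3) q_def in auto)
    then have "a * exp 1 \<le> real m / (real M - Q0) * exp 1" by (rule mult_right_mono) simp
    then have "a * exp 1 \<le> exp 1 * real m / (real M - Q0)" by (simp add: mult.commute)
    then have y1: "a * exp 1 - real m / real M \<le> exp 1 * real m / (real M - Q0) - real m / real M" by simp
    have "real q * (a * exp 1 - real m / real M) \<le> Q0 * (a * exp 1 - real m / real M)"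
      by (rule mult_right_mono) (use assms(3) q_def y0 in auto)
    also have "\<dots> \<le> Q0 * (exp 1 * real m / (real M - Q0) - real m / real M)"
      by (rule mult_left_mono[OF y1]) (use assms(3) in simp)
    finally show ?thesis by simp
  qed
  have "C * exp (- t) * (a * exp 1 + d)^q \<le> C * exp (- t) * exp (Q0 * (exp 1 * real m / (real M - Q0) - real m / real M))"
  proof (rule mult_left_mono)
    show "(a * exp 1 + d)^q \<le> exp (Q0 * (exp 1 * real m / (real M - Q0) - real m / real M))"
      unfolding ad by (rule order_trans[OF B1 B2])
  qed (use C0 in simp)
  with A1 have "real (card {E. E \<subseteq> P \<and> card E = m \<and> t < real (card (E \<inter> Q))}) \<le> C * (exp (- t) * exp (Q0 * (exp 1 * real m / (real M - Q0) - real m / real M)))"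
    by (simp add: mult.assoc)
  then show ?thesis unfolding C_def M_def by (simp add: exp_add[symmetric])
qed



lemma ln2_ge: "ln (2::real) \<ge> 1/2"
proof -
  have "ln (1/2::real) \<le> 1/2 - 1" by (rule ln_le_minus_one) simp
  then show ?thesis by (simp add: ln_div)
qed

lemma e_gt: "exp 1 > (27/10::real)"
  using e_approx_32 by (simp add: abs_if split: if_split_asm)

lemma ln7_le: "ln (7::real) < 2"
proof -
  have "exp (1::real) * exp 1 > 27/10 * (27/10)" using e_gt by (intro mult_strict_mono) auto
  then have "exp (2::real) > 7" by (simp add: exp_add[symmetric])
  then have "ln (7::real) < ln (exp 2)" by (subst ln_less_cancel_iff) auto
  then show ?thesis by simp
qed

lemma numeric:
  fixes r n :: nat and x M Q0 L :: real
  assumes r: "r \<ge> 2" and n: "n \<ge> 100 * r" and L: "L = ln (real r)"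
    and Q0: "Q0 = 3 * (real n)^2 / 2" and M: "M = real (7*r*n) * (real (7*r*n) - 1) / 2"
    and x0: "0 \<le> x" and x1: "x \<le> 501 * L * (real r)^2 * real n + 1"
  shows "2 * real n * ln (7 * real r) + 2 * real n - 70 * L * real n + Q0 * (exp 1 * x / (M - Q0) - x / M) < 0"
    and "M - Q0 \<ge> 241/10 * (real r * real n)^2"
proof -
  define R where "R = real r * real n"
  have r2: "real r \<ge> 2" using r by simp
  have n1: "real n \<ge> 200" using n r by simp
  have R200: "R \<ge> 400" unfolding R_def using r2 n1 mult_mono[OF r2 n1] by simp
  have "2 * real n \<le> R" unfolding R_def using mult_right_mono[OF r2, of "real n"] by simp
  then have "(2 * real n)^2 \<le> R^2" by (rule power_mono) simp
  then have nR: "(real n)^2 \<le> R^2 / 4" by (simp add: power_mult_distrib)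
  have r7: "real (7*r*n) = 7 * R" unfolding R_def by simp
  have "M = 7 * R * (7 * R - 1) / 2" unfolding M r7 by simp
  then have Meq: "M = (49 * R^2 - 7 * R) / 2" by (simp add: power2_eq_square right_diff_distrib)
  have MQ: "M - Q0 \<ge> 241/10 * R^2"
  proof -
    have "140 * R \<le> R * R" using mult_right_mono[of 140 R R] R200 by simp
    then have h7: "7 * R \<le> R^2 / 20" by (simp add: power2_eq_square)
    show ?thesis unfolding Meq Q0 using nR h7 by (simp add: field_simps)
  qed
  then show "M - Q0 \<ge> 241/10 * (real r * real n)^2" unfolding R_def .
  have Rp: "R > 0" using R200 by simp
  have Mle: "M \<le> 49/2 * R^2" unfolding Meq using Rp by (simp add: field_simps)
  have Q0p: "Q0 \<ge> 0" unfolding Q0 by simp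
  have R2p: "R^2 > 0" using Rp by simp
  have Mp: "M > 0" using MQ Q0p R2p by linarith
  have e: "exp 1 < (272/100::real)" by (rule e_less_272)
  have d1: "exp 1 / (M - Q0) \<le> (272/100) / (241/10 * R^2)"
  proof (rule frac_le)
    show "0 \<le> (272/100::real)" by simp
    show "exp 1 \<le> (272/100::real)" using e by linarith
    show "0 < 241/10 * R^2" using R2p by simp
    show "241/10 * R^2 \<le> M - Q0" by (rule MQ)
  qed
  have d2: "1 / (49/2 * R^2) \<le> 1 / M"
  proof (rule divide_left_mono)
    show "M \<le> 49/2 * R^2" by (rule Mle)
  qed (use Mp R2p in simp_all)
  have diff: "exp 1 / (M - Q0) - 1 / M \<le> 721 / 10000 / R^2"
  proof -
    have "(272/100) / (241/10 * R^2) - 1 / (49/2 * R^2) \<le> 721 / 10000 / R^2"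
      using Rp by (simp add: field_simps)
    then show ?thesis using d1 d2 by linarith
  qed
  have "Q0 * (exp 1 * x / (M - Q0) - x / M) = Q0 * x * (exp 1 / (M - Q0) - 1 / M)"
    by (simp add: algebra_simps)
  also have "\<dots> \<le> Q0 * x * (721 / 10000 / R^2)"
    by (rule mult_left_mono[OF diff]) (use Q0p x0 in simp)
  also have "\<dots> = 3 * 721 / 20000 * x / (real r)^2"
    unfolding Q0 R_def using n1 by (simp add: power_mult_distrib field_simps)
  also have "\<dots> \<le> 3 * 721 / 20000 * (501 * L * real n + 1)"
  proof -
    have rp: "(real r)^2 \<ge> 1" using r2 by (smt (verit) one_le_power)
    have "x / (real r)^2 \<le> (501 * L * (real r)^2 * real n + 1) / (real r)^2"
      using x1 rp by (simp add: divide_right_mono)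
    also have "\<dots> = 501 * L * real n + 1 / (real r)^2" using rp r by (simp add: add_divide_distrib)
    also have "\<dots> \<le> 501 * L * real n + 1" using rp by (simp add: divide_le_eq)
    finally show ?thesis by simp
  qed
  finally have Y: "Q0 * (exp 1 * x / (M - Q0) - x / M) \<le> 3 * 721 / 20000 * (501 * L * real n + 1)" .
  have Lge: "L \<ge> 1/2" unfolding L using ln2_ge r2
    by (smt (verit) ln_le_cancel_iff)
  have l7: "ln (7 * real r) = ln 7 + L" unfolding L using r2 by (simp add: ln_mult)
  define K where "K = L * real n"
  define W where "W = Q0 * (exp 1 * x / (M - Q0) - x / M)"
  define A where "A = 2 * real n * ln (7 * real r)"
  have "A = 2 * real n * ln 7 + 2 * K" unfolding A_def l7 K_def by (simp add: algebra_simps)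
  moreover have "2 * real n * ln 7 \<le> 2 * real n * 2" using ln7_le n1 by simp
  ultimately have f1: "A \<le> 4 * real n + 2 * K" by simp
  have f2: "1/2 * real n \<le> K" unfolding K_def by (rule mult_right_mono[OF Lge]) simp
  have "3 * 721 / 20000 * (501 * L * real n + 1) = 3 * 721 / 20000 * 501 * K + 3 * 721 / 20000"
    unfolding K_def by (simp add: algebra_simps)
  then have f3': "W \<le> 3 * 721 / 20000 * 501 * K + 3 * 721 / 20000" using Y unfolding W_def by linarith
  have f3: "W \<le> 1083663 / 20000 * K + 1" using f3' by simp
  have "A + 2 * real n - 70 * K + W < 0" using f1 f2 f3 n1 by simp
  then show "2 * real n * ln (7 * real r) + 2 * real n - 70 * L * real n + Q0 * (exp 1 * x / (M - Q0) - x / M) < 0"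
    unfolding A_def K_def W_def by (simp add: mult.assoc)
qed



lemma choose2_real: "real (k choose 2) = real k * (real k - 1) / 2"
proof (induction k)
  case 0 then show ?case by simp
next
  case (Suc k)
  have "Suc k choose 2 = k + (k choose 2)" by (simp add: numeral_2_eq_2)
  then show ?case using Suc by (simp add: field_simps)
qed

lemma cardQ:
  assumes "P \<subseteq> {e. card e = 2}" "finite S" "finite T" "S \<inter> T = {}" "card S = n" "card T = n"
  shows "real (card {e \<in> P. e \<subseteq> S \<union> T \<and> e \<inter> S \<noteq> {}}) \<le> 3 * (real n)^2 / 2"
proof -
  define A where "A = {e. e \<subseteq> S \<union> T \<and> card e = 2}"
  define B where "B = {e. e \<subseteq> T \<and> card e = 2}"
  have fST: "finite (S \<union> T)" using assms(2,3) by simp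
  have fA: "finite A" unfolding A_def
  proof (rule finite_subset[of _ "Pow (S \<union> T)"])
    show "finite (Pow (S \<union> T))" using fST by simp
  qed blast
  have BA: "B \<subseteq> A" unfolding A_def B_def by blast
  have fB: "finite B" using fA BA by (rule finite_subset[rotated])
  have sub: "{e \<in> P. e \<subseteq> S \<union> T \<and> e \<inter> S \<noteq> {}} \<subseteq> A - B"
  proof
    fix e assume e: "e \<in> {e \<in> P. e \<subseteq> S \<union> T \<and> e \<inter> S \<noteq> {}}"
    then have "card e = 2" using assms(1) by blast
    moreover have "\<not> e \<subseteq> T" using e assms(4) by blast
    ultimately show "e \<in> A - B" using e unfolding A_def B_def by blast
  qed
  have cST: "card (S \<union> T) = 2 * n" using card_Un_disjoint[OF assms(2,3,4)] assms(5,6) by simp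
  have cA: "card A = 2 * n choose 2" unfolding A_def using n_subsets[OF fST, of 2] cST by simp
  have cB: "card B = n choose 2" unfolding B_def using n_subsets[OF assms(3), of 2] assms(6) by simp
  have "card {e \<in> P. e \<subseteq> S \<union> T \<and> e \<inter> S \<noteq> {}} \<le> card (A - B)"
    by (rule card_mono) (use fA sub in auto)
  also have "card (A - B) = card A - card B" by (rule card_Diff_subset[OF fB BA])
  finally have "real (card {e \<in> P. e \<subseteq> S \<union> T \<and> e \<inter> S \<noteq> {}}) \<le> real (card A - card B)" by simp
  also have "real (card A - card B) = real (card A) - real (card B)"
    using card_mono[OF fA BA] by (simp add: of_nat_diff)
  also have "\<dots> = real (2*n) * (real (2*n) - 1) / 2 - real n * (real n - 1) / 2"
    unfolding cA cB choose2_real by simp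
  also have "\<dots> \<le> 3 * (real n)^2 / 2" by (simp add: field_simps power2_eq_square)
  finally show ?thesis .
qed



lemma exists_graph:
  fixes r n :: nat
  assumes r: "r \<ge> 2" and n: "n \<ge> 100 * r"
  shows "\<exists>(V::nat set) (E::nat set set).
        simple_graph V E \<and>
        card V = 7 * r * n \<and>
        500 * ln (real r) * (real r)^2 * real n < real (card E) \<and>
        real (card E) < 600 * ln (real r) * (real r)^2 * real n \<and>
        (\<forall>S T. S \<subseteq> V \<longrightarrow> T \<subseteq> V \<longrightarrow> S \<inter> T = {} \<longrightarrow>
               card S = n \<longrightarrow> card T = n \<longrightarrow>
               real (card (edges_touching E S T)) \<le> 70 * ln (real r) * real n)"
proof -
  define L where "L = ln (real r)"
  define v where "v = 7 * r * n"
  define V where "V = {..<v}"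
  define P where "P = {e. e \<subseteq> V \<and> card e = 2}"
  define M where "M = card P"
  define m where "m = nat \<lceil>501 * L * (real r)^2 * real n\<rceil>"
  define t where "t = 70 * L * real n"
  define Q0 where "Q0 = 3 * (real n)^2 / 2"
  define Qf where "Qf = (\<lambda>S T. {e \<in> P. e \<subseteq> S \<union> T \<and> e \<inter> S \<noteq> {}})"
  define Pairs where "Pairs = {(S,T). S \<subseteq> V \<and> T \<subseteq> V \<and> S \<inter> T = {} \<and> card S = n \<and> card T = n}"
  define Bad where "Bad = (\<lambda>p. {E. E \<subseteq> P \<and> card E = m \<and> t < real (card (E \<inter> Qf (fst p) (snd p)))})"
  define Es where "Es = {E. E \<subseteq> P \<and> card E = m}"
  define B where "B = exp (- t + Q0 * (exp 1 * real m / (real M - Q0) - real m / real M))"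
  have r2: "real r \<ge> 2" using r by simp
  have n1: "n \<ge> 1" using n r by simp
  have Lpos: "L > 0" unfolding L_def using r2 by simp
  have LR: "L \<le> real r" unfolding L_def using ln_le_minus_one[of "real r"] r2 by simp
  have fV: "finite V" unfolding V_def by simp
  have cV: "card V = v" unfolding V_def by simp
  have fP: "finite P" unfolding P_def
  proof (rule finite_subset[of _ "Pow V"])
    show "finite (Pow V)" using fV by simp
  qed blast
  have cP: "M = v choose 2" unfolding M_def P_def using n_subsets[OF fV, of 2] cV by simp
  have rM: "real M = real (7*r*n) * (real (7*r*n) - 1) / 2" unfolding cP choose2_real v_def ..
  have num: "2 * real n * ln (7 * real r) + 2 * real n - 70 * L * real n + Q0 * (exp 1 * real m / (real M - Q0) - real m / real M) < 0"
    and MQ: "real M - Q0 \<ge> 241/10 * (real r * real n)^2"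
  proof -
    have m0: "0 \<le> real m" by simp
    have "real m = real_of_int \<lceil>501 * L * (real r)^2 * real n\<rceil>" unfolding m_def
      using Lpos by (simp add: of_nat_nat)
    then have "real m < 501 * L * (real r)^2 * real n + 1" by linarith
    then have m1: "real m \<le> 501 * L * (real r)^2 * real n + 1" by simp
    show "2 * real n * ln (7 * real r) + 2 * real n - 70 * L * real n + Q0 * (exp 1 * real m / (real M - Q0) - real m / real M) < 0"
      by (rule numeric(1)[OF r n L_def Q0_def rM m0 m1])
    show "real M - Q0 \<ge> 241/10 * (real r * real n)^2"
      by (rule numeric(2)[OF r n L_def Q0_def rM m0 m1])
  qed
  have mge: "real m \<ge> 501 * L * (real r)^2 * real n"
  proof -
    have "real m = real_of_int \<lceil>501 * L * (real r)^2 * real n\<rceil>" unfolding m_def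
      using Lpos by (simp add: of_nat_nat)
    then show ?thesis by linarith
  qed
  have mlt: "real m < 501 * L * (real r)^2 * real n + 1"
  proof -
    have "real m = real_of_int \<lceil>501 * L * (real r)^2 * real n\<rceil>" unfolding m_def
      using Lpos by (simp add: of_nat_nat)
    then show ?thesis by linarith
  qed
  define Z where "Z = (real r)^2 * real n"
  have r4: "(real r)^2 \<ge> 4" using power_mono[OF r2, of 2] by simp
  have Z1: "Z \<ge> 1" unfolding Z_def using mult_mono[OF r4, of 1 "real n"] n1 by simp
  have Zm: "501 * L * (real r)^2 * real n = 501 * (L * Z)" unfolding Z_def by (simp add: mult.assoc)
  have Zm0: "500 * L * (real r)^2 * real n = 500 * (L * Z)" unfolding Z_def by (simp add: mult.assoc)
  have Zm6: "600 * L * (real r)^2 * real n = 600 * (L * Z)" unfolding Z_def by (simp add: mult.assoc)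
  have LZ: "L * Z > 0" using Lpos Z1 by simp
  have lower: "500 * L * (real r)^2 * real n < real m"
    using mge LZ unfolding Zm Zm0 by linarith
  have Lh: "L \<ge> 1/2"
  proof -
    have "ln 2 \<le> ln (real r)" using r2 by simp
    then show ?thesis unfolding L_def using ln2_ge by linarith
  qed
  have LZh: "L * Z \<ge> 1/2 * 1" by (rule mult_mono[OF Lh Z1]) (use Lpos in simp_all)
  have upper: "real m < 600 * L * (real r)^2 * real n"
    using mlt LZh unfolding Zm Zm6 by linarith
  have mM: "m \<le> M"
  proof -
    have a1: "L * Z \<le> real r * Z" by (rule mult_right_mono[OF LR]) (use Z1 in simp)
    have "real n \<ge> 100 * real r" using n by simp
    then have a2: "Z * real n \<ge> Z * (100 * real r)" by (rule mult_left_mono) (use Z1 in simp)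
    have a3: "(real r * real n)^2 = Z * real n" unfolding Z_def by (simp add: power2_eq_square)
    have a4: "Z * (100 * real r) = 100 * (real r * Z)" by simp
    have a5: "real r * Z \<ge> 1 * 1" by (rule mult_mono[OF _ Z1]) (use r2 in simp_all)
    have "Q0 \<ge> 0" unfolding Q0_def by simp
    then have "real m \<le> real M" using mlt MQ a1 a2 a3 a4 a5 unfolding Zm by linarith
    then show ?thesis by simp
  qed
  have Q0M: "Q0 < real M"
  proof -
    have "241/10 * (real r * real n)^2 > 0" using r2 n1 by simp
    then show ?thesis using MQ by linarith
  qed
  have t0: "t \<ge> 0" unfolding t_def using Lpos by simp
  have badb: "real (card (Bad p)) \<le> real (M choose m) * B" if "p \<in> Pairs" for p
  proof -
    obtain S T where p: "p = (S,T)" by (cases p)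
    have ST: "S \<subseteq> V" "T \<subseteq> V" "S \<inter> T = {}" "card S = n" "card T = n"
      using that unfolding p Pairs_def by auto
    have fS: "finite S" "finite T" using ST fV finite_subset by blast+
    have QP: "Qf S T \<subseteq> P" unfolding Qf_def by blast
    have cq: "real (card (Qf S T)) \<le> Q0" unfolding Qf_def Q0_def
      by (rule cardQ) (use ST fS P_def in auto)
    show ?thesis unfolding Bad_def p B_def M_def fst_conv snd_conv
      by (rule bad_bound[OF fP QP cq]) (use Q0M mM t0 M_def in auto)
  qed
  have fPairs: "finite Pairs"
  proof (rule finite_subset[of _ "Pow V \<times> Pow V"])
    show "Pairs \<subseteq> Pow V \<times> Pow V" unfolding Pairs_def by blast
  qed (use fV in simp)
  have cPairs: "card Pairs \<le> (v choose n) * (v choose n)"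
  proof -
    have "Pairs \<subseteq> {S. S \<subseteq> V \<and> card S = n} \<times> {S. S \<subseteq> V \<and> card S = n}"
      unfolding Pairs_def by blast
    then have "card Pairs \<le> card ({S. S \<subseteq> V \<and> card S = n} \<times> {S. S \<subseteq> V \<and> card S = n})"
      by (rule card_mono[rotated]) (use fV in simp)
    also have "\<dots> = (v choose n) * (v choose n)"
      by (simp add: card_cartesian_product n_subsets[OF fV] cV)
    finally show ?thesis .
  qed
  have chb: "real (v choose n) \<le> exp (real n * ln (7 * real r) + real n)"
  proof -
    have "real (v choose n) \<le> real v ^ n * exp (real n) / real n ^ n" by (rule choose_le_exp[OF n1])
    also have "real v ^ n = (7 * real r) ^ n * real n ^ n" unfolding v_def by (simp add: power_mult_distrib)
    also have "(7 * real r) ^ n = exp (real n * ln (7 * real r))"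
      using exp_of_nat_mult[of n "ln (7 * real r)"] r2 by simp
    finally show ?thesis using n1 by (simp add: exp_add)
  qed
  have keyn: "real (v choose n) * real (v choose n) * B < 1"
  proof -
    have "real (v choose n) * real (v choose n) * B \<le> exp (real n * ln (7 * real r) + real n) * exp (real n * ln (7 * real r) + real n) * B"
      unfolding B_def by (intro mult_right_mono mult_mono chb) auto
    also have "\<dots> = exp (2 * real n * ln (7 * real r) + 2 * real n - 70 * L * real n + Q0 * (exp 1 * real m / (real M - Q0) - real m / real M))"
      unfolding B_def t_def by (simp add: exp_add[symmetric] algebra_simps)
    also have "\<dots> < 1" using num by simp
    finally show ?thesis .
  qed
  have Cpos: "real (M choose m) > 0" using mM by simp
  have B0: "B \<ge> 0" unfolding B_def by simp
  have finBad: "finite (\<Union>p\<in>Pairs. Bad p)"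
  proof (rule finite_subset[of _ "Pow P"])
    show "(\<Union>p\<in>Pairs. Bad p) \<subseteq> Pow P" unfolding Bad_def by blast
  qed (use fP in simp)
  have "real (card (\<Union>p\<in>Pairs. Bad p)) \<le> real (\<Sum>p\<in>Pairs. card (Bad p))"
    using card_UN_le[OF fPairs, of Bad] by (simp only: of_nat_le_iff)
  also have "\<dots> = (\<Sum>p\<in>Pairs. real (card (Bad p)))" by simp
  also have "\<dots> \<le> (\<Sum>p\<in>Pairs. real (M choose m) * B)" by (rule sum_mono) (rule badb)
  also have "\<dots> = real (card Pairs) * (real (M choose m) * B)" by simp
  also have "\<dots> \<le> real ((v choose n) * (v choose n)) * (real (M choose m) * B)"
  proof (rule mult_right_mono)
    show "real (card Pairs) \<le> real ((v choose n) * (v choose n))" using cPairs by (simp only: of_nat_le_iff)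
  qed (use Cpos B0 in simp)
  also have "\<dots> = real (M choose m) * (real (v choose n) * real (v choose n) * B)" by simp
  also have "\<dots> < real (M choose m) * 1" by (rule mult_strict_left_mono[OF keyn Cpos])
  finally have lt: "card (\<Union>p\<in>Pairs. Bad p) < card Es"
    using n_subsets[OF fP, of m] unfolding Es_def M_def by simp
  have "\<not> Es \<subseteq> (\<Union>p\<in>Pairs. Bad p)"
  proof
    assume "Es \<subseteq> (\<Union>p\<in>Pairs. Bad p)"
    then have "card Es \<le> card (\<Union>p\<in>Pairs. Bad p)" by (rule card_mono[OF finBad])
    then show False using lt by simp
  qed
  then obtain E where E: "E \<in> Es" "E \<notin> (\<Union>p\<in>Pairs. Bad p)" by blast
  have EP: "E \<subseteq> P" "card E = m" using E(1) unfolding Es_def by auto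
  show ?thesis
  proof (intro exI conjI allI impI)
    show "simple_graph V E" unfolding simple_graph_def using fV EP(1) unfolding P_def by blast
    show "card V = 7 * r * n" using cV v_def by simp
    show "500 * ln (real r) * (real r)^2 * real n < real (card E)" using lower EP(2) L_def by simp
    show "real (card E) < 600 * ln (real r) * (real r)^2 * real n" using upper EP(2) L_def by simp
    fix S T assume ST: "S \<subseteq> V" "T \<subseteq> V" "S \<inter> T = {}" "card S = n" "card T = n"
    then have "(S,T) \<in> Pairs" unfolding Pairs_def by blast
    then have "E \<notin> Bad (S,T)" using E(2) by blast
    then have "\<not> t < real (card (E \<inter> Qf S T))" using EP unfolding Bad_def by simp
    moreover have "edges_touching E S T = E \<inter> Qf S T"
      unfolding edges_touching_def Qf_def using EP(1) by blast
    ultimately show "real (card (edges_touching E S T)) \<le> 70 * ln (real r) * real n"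
      unfolding t_def L_def by simp
  qed
qed

theorem proposition2p1:
  "\<forall>r::nat. r \<ge> 2 \<longrightarrow> (\<exists>N::nat. \<forall>n::nat. n \<ge> N \<longrightarrow>
     (\<exists>(V::nat set) (E::nat set set).
        simple_graph V E \<and>
        card V = 7 * r * n \<and>
        500 * ln (real r) * (real r)^2 * real n < real (card E) \<and>
        real (card E) < 600 * ln (real r) * (real r)^2 * real n \<and>
        (\<forall>S T. S \<subseteq> V \<longrightarrow> T \<subseteq> V \<longrightarrow> S \<inter> T = {} \<longrightarrow>
               card S = n \<longrightarrow> card T = n \<longrightarrow>
               real (card (edges_touching E S T)) \<le> 70 * ln (real r) * real n)))"
proof (intro allI impI)
  fix r :: nat assume r: "r \<ge> 2"
  show "\<exists>N::nat. \<forall>n::nat. n \<ge> N \<longrightarrow>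
     (\<exists>(V::nat set) (E::nat set set).
        simple_graph V E \<and>
        card V = 7 * r * n \<and>
        500 * ln (real r) * (real r)^2 * real n < real (card E) \<and>
        real (card E) < 600 * ln (real r) * (real r)^2 * real n \<and>
        (\<forall>S T. S \<subseteq> V \<longrightarrow> T \<subseteq> V \<longrightarrow> S \<inter> T = {} \<longrightarrow>
               card S = n \<longrightarrow> card T = n \<longrightarrow>
               real (card (edges_touching E S T)) \<le> 70 * ln (real r) * real n))"
    using exists_graph[OF r] by blast
qed

end
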